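(* Every cyclic and connected extended representation graph for $E$ is isomorphic to $(F_x,\phi_x)$ for some $x\in X^c$.
   Context: $E=(E^0,E^1,s,r)$ is a row-finite directed graph; for each vertex $v$ emitting an edge a fixed edge $e^v\in s^{-1}(v)$ is called special, others nonspecial. The double graph $E_d$ has vertices $E^0$ and edges $e$ (real) and $e^*$ (ghost) for $e\in E^1$, with $s_d(e)=s(e),r_d(e)=r(e),s_d(e^* )=r(e),r_d(e^* )=s(e)$. For a path $p=e_1\dots e_n$ set $p^*=e_n^*\dots e_1^*$. The set $X$ of basis paths consists of the paths in $E_d$: vertices; $p,p^*$ for paths $p$ of length $\ge1$ in $E$; $pq^*$ with $p=e_1\dots e_k,q=f_1\dots f_n$ of length $\ge1$ in $E$, $r(p)=r(q)$, and $e_k\ne f_n$ or $e_k=f_n$ nonspecial. $X^c$ is the set of closed paths of length $\ge1$ in $E_d$ consisting only of real edges or only of ghost edges. An extended representation graph for $E$ is a pair $(F,\phi)$, $F$ a directed graph, $\phi:F\to E_d$ a graph homomorphism, such that for every $w\in F^0$: (i) $w$ is a source or receives exactly one edge $f_w$; (ii) if $w$ is a source or $\phi(f_w)$ is a nonspecial real edge, $\phi$ maps $s^{-1}(w)$ bijectively onto $s_d^{-1}(\phi(w))$; (iii) if $\phi(f_w)$ is a special real edge, onto $s_d^{-1}(\phi(w))\setminus\{\phi(f_w)^*\}$; (iv) if $\phi(f_w)$ is a ghost edge, onto the ghost edges in $s_d^{-1}(\phi(w))$. An isomorphism $(F,\phi)\to(G,\psi)$ is a graph isomorphism $\alpha$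 with $\psi\circ\alpha=\phi$. $F$ is connected if any two vertices are joined by a path when edge directions are ignored; cyclic if it contains a cycle (closed path of length $\ge1$ whose edges have pairwise distinct sources). $(F_x,\phi_x)$ for $x=x_1\dots x_m\in X^c$: for $1\le i\le m$, $X_i$ = basis paths $y=y_1\dots y_n$, $n\ge1$, with $x_iy_1$ a basis path and $y_1\ne x_{i+1}$ ($x_{m+1}=x_1$). Vertices $w_i$ ($1\le i\le m$), $w_{i,y}$ ($y\in X_i$), all distinct; edges $f_i$ from $w_{i-1}$ to $w_i$ ($w_0=w_m$), and $f_{i,y}$ to $w_{i,y}$ from $w_i$ if $|y|=1$, from $w_{i,y_1\dots y_{n-1}}$ if $n\ge2$; $\phi_x(w_i)=r_d(x_i)$, $\phi_x(w_{i,y})=r_d(y)$, $\phi_x(f_i)=x_i$, $\phi_x(f_{i,y})=$ last edge of $y$. *)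

theory Defs
  imports Main
begin

record ('v, 'e) dgraph =
  verts :: "'v set"
  arcs  :: "'e set"
  src   :: "'e \<Rightarrow> 'v"
  tgt   :: "'e \<Rightarrow> 'v"

definition is_dgraph :: "('v, 'e) dgraph \<Rightarrow> bool" where
  "is_dgraph G \<longleftrightarrow> (\<forall>e\<in>arcs G. src G e \<in> verts G \<and> tgt G e \<in> verts G)"

definition out_arcs :: "('v, 'e) dgraph \<Rightarrow> 'v \<Rightarrow> 'e set" where
  "out_arcs G v = {e \<in> arcs G. src G e = v}"

definition in_arcs :: "('v, 'e) dgraph \<Rightarrow> 'v \<Rightarrow> 'e set" where
  "in_arcs G v = {e \<in> arcs G. tgt G e = v}"

definition row_finite :: "('v, 'e) dgraph \<Rightarrow> bool" where
  "row_finite G \<longleftrightarrow> (\<forall>v\<in>verts G. finite (out_arcs G v))"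

definition undir_adj :: "('v, 'e) dgraph \<Rightarrow> 'v \<Rightarrow> 'v \<Rightarrow> bool" where
  "undir_adj G u v \<longleftrightarrow> (\<exists>e\<in>arcs G. (src G e = u \<and> tgt G e = v) \<or> (src G e = v \<and> tgt G e = u))"

definition connected_graph :: "('v, 'e) dgraph \<Rightarrow> bool" where
  "connected_graph G \<longleftrightarrow> (\<forall>u\<in>verts G. \<forall>v\<in>verts G. (undir_adj G)\<^sup>*\<^sup>* u v)"

definition is_path :: "('v, 'e) dgraph \<Rightarrow> 'e list \<Rightarrow> bool" where
  "is_path G p \<longleftrightarrow> p \<noteq> [] \<and> set p \<subseteq> arcs G \<and>
     (\<forall>i. Suc i < length p \<longrightarrow> tgt G (p ! i) = src G (p ! Suc i))"

definition is_closed_path :: "('v, 'e) dgraph \<Rightarrow> 'e list \<Rightarrow> bool" where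
  "is_closed_path G p \<longleftrightarrow> is_path G p \<and> tgt G (last p) = src G (hd p)"

definition cyclic_graph :: "('v, 'e) dgraph \<Rightarrow> bool" where
  "cyclic_graph G \<longleftrightarrow> (\<exists>p. is_closed_path G p \<and> distinct (map (src G) p))"

definition special_choice :: "('v, 'e) dgraph \<Rightarrow> ('v \<Rightarrow> 'e) \<Rightarrow> bool" where
  "special_choice E sp \<longleftrightarrow>
     (\<forall>v\<in>verts E. out_arcs E v \<noteq> {} \<longrightarrow> sp v \<in> out_arcs E v)"

definition special :: "('v, 'e) dgraph \<Rightarrow> ('v \<Rightarrow> 'e) \<Rightarrow> 'e \<Rightarrow> bool" where
  "special E sp e \<longleftrightarrow> e = sp (src E e)"

datatype 'e dedge = Real 'e | Ghost 'e

fun is_ghost :: "'e dedge \<Rightarrow> bool" where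
  "is_ghost (Real _) = False"
| "is_ghost (Ghost _) = True"

fun is_real :: "'e dedge \<Rightarrow> bool" where
  "is_real (Real _) = True"
| "is_real (Ghost _) = False"

fun dsrc :: "('v, 'e) dgraph \<Rightarrow> 'e dedge \<Rightarrow> 'v" where
  "dsrc E (Real e) = src E e"
| "dsrc E (Ghost e) = tgt E e"

fun dtgt :: "('v, 'e) dgraph \<Rightarrow> 'e dedge \<Rightarrow> 'v" where
  "dtgt E (Real e) = tgt E e"
| "dtgt E (Ghost e) = src E e"

definition double_graph :: "('v, 'e) dgraph \<Rightarrow> ('v, 'e dedge) dgraph" where
  "double_graph E = \<lparr>verts = verts E, arcs = Real ` arcs E \<union> Ghost ` arcs E,
                     src = dsrc E, tgt = dtgt E\<rparr>"

text \<open>Basis paths of length \<ge> 1 (the vertices, also basis paths, are not needed here):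
  p, q^*, p q^* with the turn condition.\<close>
definition basis_path :: "('v, 'e) dgraph \<Rightarrow> ('v \<Rightarrow> 'e) \<Rightarrow> 'e dedge list \<Rightarrow> bool" where
  "basis_path E sp y \<longleftrightarrow> is_path (double_graph E) y \<and>
     (\<exists>p q. y = map Real p @ map Ghost (rev q) \<and>
        (p \<noteq> [] \<and> q \<noteq> [] \<longrightarrow> (last p \<noteq> last q \<or> \<not> special E sp (last p))))"

definition Xc :: "('v, 'e) dgraph \<Rightarrow> 'e dedge list set" where
  "Xc E = {x. is_closed_path (double_graph E) x \<and>
              ((\<forall>d\<in>set x. is_real d) \<or> (\<forall>d\<in>set x. is_ghost d))}"

definition graph_hom :: "('w, 'f) dgraph \<Rightarrow> ('v, 'e) dgraph \<Rightarrow> ('w \<Rightarrow> 'v) \<Rightarrow> ('f \<Rightarrow> 'e) \<Rightarrow> bool" where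
  "graph_hom F G hv he \<longleftrightarrow> hv ` verts F \<subseteq> verts G \<and> he ` arcs F \<subseteq> arcs G \<and>
     (\<forall>f\<in>arcs F. src G (he f) = hv (src F f) \<and> tgt G (he f) = hv (tgt F f))"

definition ext_rep_graph ::
  "('v, 'e) dgraph \<Rightarrow> ('v \<Rightarrow> 'e) \<Rightarrow> ('w, 'f) dgraph \<Rightarrow> ('w \<Rightarrow> 'v) \<Rightarrow> ('f \<Rightarrow> 'e dedge) \<Rightarrow> bool" where
  "ext_rep_graph E sp F phv phe \<longleftrightarrow>
     is_dgraph F \<and> graph_hom F (double_graph E) phv phe \<and>
     (\<forall>w\<in>verts F.
        (in_arcs F w = {} \<and>
           bij_betw phe (out_arcs F w) (out_arcs (double_graph E) (phv w))) \<or>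
        (\<exists>fw. in_arcs F w = {fw} \<and>
           (case phe fw of
              Real e \<Rightarrow>
                (if special E sp e
                 then bij_betw phe (out_arcs F w) (out_arcs (double_graph E) (phv w) - {Ghost e})
                 else bij_betw phe (out_arcs F w) (out_arcs (double_graph E) (phv w)))
            | Ghost e \<Rightarrow>
                bij_betw phe (out_arcs F w) {d \<in> out_arcs (double_graph E) (phv w). is_ghost d})))"

definition rep_isomorphic ::
  "('w, 'f) dgraph \<Rightarrow> ('w \<Rightarrow> 'v) \<Rightarrow> ('f \<Rightarrow> 'd) \<Rightarrow>
   ('w2, 'f2) dgraph \<Rightarrow> ('w2 \<Rightarrow> 'v) \<Rightarrow> ('f2 \<Rightarrow> 'd) \<Rightarrow> bool" where
  "rep_isomorphic F phv phe G psv pse \<longleftrightarrow>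
     (\<exists>av ae. bij_betw av (verts F) (verts G) \<and> bij_betw ae (arcs F) (arcs G) \<and>
        (\<forall>f\<in>arcs F. src G (ae f) = av (src F f) \<and> tgt G (ae f) = av (tgt F f)) \<and>
        (\<forall>w\<in>verts F. psv (av w) = phv w) \<and>
        (\<forall>f\<in>arcs F. pse (ae f) = phe f))"

text \<open>Indices are 0-based: x_i = x ! i for i < m = length x; x_{i+1} is x ! ((i+1) mod m).
  Vertex w_i is Inl i, vertex w_{i,y} is Inr (i, y); edge f_i is Inl i, edge f_{i,y} is Inr (i, y).\<close>
definition Xi :: "('v, 'e) dgraph \<Rightarrow> ('v \<Rightarrow> 'e) \<Rightarrow> 'e dedge list \<Rightarrow> nat \<Rightarrow> 'e dedge list set" where
  "Xi E sp x i = {y. y \<noteq> [] \<and> basis_path E sp y \<and> basis_path E sp (x ! i # y) \<and>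
                    hd y \<noteq> x ! (Suc i mod length x)}"

definition Fx_index :: "('v, 'e) dgraph \<Rightarrow> ('v \<Rightarrow> 'e) \<Rightarrow> 'e dedge list \<Rightarrow>
                        (nat + nat \<times> 'e dedge list) set" where
  "Fx_index E sp x = Inl ` {..<length x} \<union> {Inr (i, y) | i y. i < length x \<and> y \<in> Xi E sp x i}"

fun Fx_src :: "'e dedge list \<Rightarrow> (nat + nat \<times> 'e dedge list) \<Rightarrow> (nat + nat \<times> 'e dedge list)" where
  "Fx_src x (Inl i) = Inl ((i + length x - 1) mod length x)"
| "Fx_src x (Inr (i, y)) = (if length y = 1 then Inl i else Inr (i, butlast y))"

definition Fx_graph :: "('v, 'e) dgraph \<Rightarrow> ('v \<Rightarrow> 'e) \<Rightarrow> 'e dedge list \<Rightarrow>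
     (nat + nat \<times> 'e dedge list, nat + nat \<times> 'e dedge list) dgraph" where
  "Fx_graph E sp x = \<lparr>verts = Fx_index E sp x, arcs = Fx_index E sp x,
                      src = Fx_src x, tgt = id\<rparr>"

fun Fx_phie :: "'e dedge list \<Rightarrow> (nat + nat \<times> 'e dedge list) \<Rightarrow> 'e dedge" where
  "Fx_phie x (Inl i) = x ! i"
| "Fx_phie x (Inr (i, y)) = last y"

definition Fx_phiv :: "('v, 'e) dgraph \<Rightarrow> 'e dedge list \<Rightarrow> (nat + nat \<times> 'e dedge list) \<Rightarrow> 'v" where
  "Fx_phiv E x w = dtgt E (Fx_phie x w)"

end

theory Submission
  imports Defs
begin

fun okp :: "('v,'e) dgraph \<Rightarrow> ('v \<Rightarrow> 'e) \<Rightarrow> 'e dedge \<Rightarrow> 'e dedge \<Rightarrow> bool" where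
  "okp E sp (Real e) d = (\<not> (special E sp e \<and> d = Ghost e))"
| "okp E sp (Ghost e) d = is_ghost d"

definition shape :: "('v,'e) dgraph \<Rightarrow> ('v \<Rightarrow> 'e) \<Rightarrow> 'e dedge list \<Rightarrow> bool" where
  "shape E sp y \<longleftrightarrow> (\<exists>p q. y = map Real p @ map Ghost (rev q) \<and>
        (p \<noteq> [] \<and> q \<noteq> [] \<longrightarrow> (last p \<noteq> last q \<or> \<not> special E sp (last p))))"

lemma basis_path_shape: "basis_path E sp y \<longleftrightarrow> is_path (double_graph E) y \<and> shape E sp y"
  unfolding basis_path_def shape_def by simp

lemma is_path_snoc:
  assumes "z \<noteq> []"
  shows "is_path G (z @ [d]) \<longleftrightarrow> is_path G z \<and> d \<in> arcs G \<and> tgt G (last z) = src G d"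
proof -
  have A: "(\<forall>i. Suc i < length (z @ [d]) \<longrightarrow> tgt G ((z@[d]) ! i) = src G ((z@[d]) ! Suc i)) \<longleftrightarrow>
    (\<forall>i. Suc i < length z \<longrightarrow> tgt G (z ! i) = src G (z ! Suc i)) \<and> tgt G (last z) = src G d"
  proof
    assume H: "\<forall>i. Suc i < length (z @ [d]) \<longrightarrow> tgt G ((z@[d]) ! i) = src G ((z@[d]) ! Suc i)"
    show "(\<forall>i. Suc i < length z \<longrightarrow> tgt G (z ! i) = src G (z ! Suc i)) \<and> tgt G (last z) = src G d"
    proof (intro conjI allI impI)
      fix i assume "Suc i < length z"
      then show "tgt G (z ! i) = src G (z ! Suc i)" using H[rule_format, of i] by (simp add: nth_append)
    next
      have "Suc (length z - 1) < length (z @ [d])" using assms by simp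
      from H[rule_format, OF this] show "tgt G (last z) = src G d" using assms
        by (simp add: nth_append last_conv_nth)
    qed
  next
    assume H: "(\<forall>i. Suc i < length z \<longrightarrow> tgt G (z ! i) = src G (z ! Suc i)) \<and> tgt G (last z) = src G d"
    show "\<forall>i. Suc i < length (z @ [d]) \<longrightarrow> tgt G ((z@[d]) ! i) = src G ((z@[d]) ! Suc i)"
    proof (intro allI impI)
      fix i assume i: "Suc i < length (z @ [d])"
      show "tgt G ((z@[d]) ! i) = src G ((z@[d]) ! Suc i)"
      proof (cases "Suc i < length z")
        case True then show ?thesis using H by (simp add: nth_append)
      next
        case False
        then have "i = length z - 1" using i by simp
        then show ?thesis using H assms by (simp add: nth_append last_conv_nth)
      qed
    qed
  qed
  show ?thesis unfolding is_path_def using A assms by auto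
qed

lemma shape_snoc:
  assumes "z \<noteq> []"
  shows "shape E sp (z @ [d]) \<longleftrightarrow> shape E sp z \<and> okp E sp (last z) d"
proof (cases d)
  case (Real e)
  show ?thesis
  proof
    assume "shape E sp (z @ [d])"
    then obtain p q where pq: "z @ [Real e] = map Real p @ map Ghost (rev q)"
      unfolding shape_def Real by blast
    have "q = []"
    proof (rule ccontr)
      assume "q \<noteq> []"
      then have "last (map Real p @ map Ghost (rev q)) = Ghost (hd q)"
        by (cases q) simp_all
      with pq show False by (metis dedge.distinct(1) last_snoc)
    qed
    with pq have zp: "z = map Real (butlast p)"
      by (metis append_Nil2 butlast_snoc list.simps(8) map_butlast rev.simps(1))
    then have "shape E sp z" unfolding shape_def by (rule_tac x="butlast p" in exI, rule_tac x="[]" in exI) simp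
    moreover have "okp E sp (last z) d" using zp assms Real
      by (cases "butlast p" rule: rev_cases) auto
    ultimately show "shape E sp z \<and> okp E sp (last z) d" by simp
  next
    assume H: "shape E sp z \<and> okp E sp (last z) d"
    then obtain p q where pq: "z = map Real p @ map Ghost (rev q)" and c: "(p \<noteq> [] \<and> q \<noteq> [] \<longrightarrow> (last p \<noteq> last q \<or> \<not> special E sp (last p)))"
      unfolding shape_def by blast
    have "q = []"
    proof (rule ccontr)
      assume "q \<noteq> []"
      then have "last z = Ghost (hd q)" using pq
        by (cases q) simp_all
      then show False using H Real by simp
    qed
    then have "z @ [d] = map Real (p @ [e]) @ map Ghost (rev [])" using pq Real by simp
    then show "shape E sp (z @ [d])" unfolding shape_def by blast
  qed
next
  case (Ghost e)
  show ?thesis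
  proof
    assume "shape E sp (z @ [d])"
    then obtain p q where pq: "z @ [Ghost e] = map Real p @ map Ghost (rev q)"
      and c: "(p \<noteq> [] \<and> q \<noteq> [] \<longrightarrow> (last p \<noteq> last q \<or> \<not> special E sp (last p)))"
      unfolding shape_def Ghost by blast
    have "q \<noteq> []"
    proof
      assume "q = []"
      with pq have "last (map Real p) = Ghost e" by (metis append_Nil2 last_snoc list.simps(8) rev.simps(1))
      moreover have "p \<noteq> []" using pq \<open>q = []\<close> by auto
      ultimately show False by (simp add: last_map)
    qed
    then obtain q0 q' where q: "q = q0 # q'" by (cases q) auto
    with pq have "z @ [Ghost e] = (map Real p @ map Ghost (rev q')) @ [Ghost q0]" by simp
    then have zz: "z = map Real p @ map Ghost (rev q')" and e: "e = q0" by auto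
    have s: "shape E sp z" unfolding shape_def
      apply (rule exI[of _ p], rule exI[of _ q'])
      using zz c q by auto
    have "okp E sp (last z) d"
    proof (cases "q' = []")
      case True
      then have "z = map Real p" using zz by simp
      then have "p \<noteq> []" "last z = Real (last p)" using assms by (auto simp: last_map)
      then show ?thesis using c q True e Ghost by auto
    next
      case False
      then have "last z = Ghost (hd q')" using zz
        by (cases q') simp_all
      then show ?thesis using Ghost by simp
    qed
    with s show "shape E sp z \<and> okp E sp (last z) d" by simp
  next
    assume H: "shape E sp z \<and> okp E sp (last z) d"
    then obtain p q where pq: "z = map Real p @ map Ghost (rev q)" and c: "(p \<noteq> [] \<and> q \<noteq> [] \<longrightarrow> (last p \<noteq> last q \<or> \<not> special E sp (last p)))"
      unfolding shape_def by blast
    have eq: "z @ [d] = map Real p @ map Ghost (rev (e # q))" using pq Ghost by simp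
    have "p \<noteq> [] \<and> e # q \<noteq> [] \<longrightarrow> (last p \<noteq> last (e # q) \<or> \<not> special E sp (last p))"
    proof (cases "q = []")
      case True
      then have "z = map Real p" using pq by simp
      then have "p \<noteq> [] \<Longrightarrow> last z = Real (last p)" by (simp add: last_map)
      then show ?thesis using H Ghost True by auto
    next
      case False then show ?thesis using c by simp
    qed
    then show "shape E sp (z @ [d])" unfolding shape_def using eq by blast
  qed
qed

lemma basis_path_snoc:
  assumes "z \<noteq> []"
  shows "basis_path E sp (z @ [d]) \<longleftrightarrow> basis_path E sp z \<and> d \<in> arcs (double_graph E)
     \<and> dsrc E d = dtgt E (last z) \<and> okp E sp (last z) d"
  unfolding basis_path_shape is_path_snoc[OF assms] shape_snoc[OF assms]
  by (auto simp: double_graph_def)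

lemma basis_path_single: "d \<in> arcs (double_graph E) \<Longrightarrow> basis_path E sp [d]"
  unfolding basis_path_def is_path_def
  apply (cases d)
   apply (auto)
   apply (rule exI[of _ "[_]"], rule exI[of _ "[]"], simp)
  apply (rule exI[of _ "[]"], rule exI[of _ "[_]"], simp)
  done

locale P516 =
  fixes E :: "('v,'e) dgraph" and sp :: "'v \<Rightarrow> 'e" and F :: "('w,'f) dgraph"
    and phv :: "'w \<Rightarrow> 'v" and phe :: "'f \<Rightarrow> 'e dedge" and p :: "'f list"
  assumes ext: "ext_rep_graph E sp F phv phe"
    and cyc: "is_closed_path F p" and dist: "distinct (map (src F) p)"
    and conn: "connected_graph F"
begin

abbreviation "G \<equiv> double_graph E"
definition "m = length p"
definition "x = map phe p"
definition "u i = tgt F (p ! i)"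
definition "ch v d = (THE g. g \<in> out_arcs F v \<and> phe g = d)"
definition "walk v y = foldl (\<lambda>v d. tgt F (ch v d)) v y"
definition "be a = (case a of Inl i \<Rightarrow> p ! i | Inr (i, y) \<Rightarrow> ch (walk (u i) (butlast y)) (last y))"
definition "bv a = tgt F (be a)"

lemma be_simps[simp]: "be (Inl i) = p ! i" "be (Inr (i, y)) = ch (walk (u i) (butlast y)) (last y)"
  unfolding be_def by simp_all

lemma dgF: "is_dgraph F" and hom: "graph_hom F G phv phe"
  using ext unfolding ext_rep_graph_def by auto

lemma arc_facts:
  assumes "f \<in> arcs F"
  shows "phv (tgt F f) = dtgt E (phe f)" "dsrc E (phe f) = phv (src F f)" "phe f \<in> arcs G"
    "tgt F f \<in> verts F" "src F f \<in> verts F"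
  using hom dgF assms unfolding graph_hom_def is_dgraph_def by (auto simp: double_graph_def)

definition "goodv w \<longleftrightarrow> (\<exists>fw. in_arcs F w = {fw} \<and>
           (case phe fw of
              Real e \<Rightarrow>
                (if special E sp e
                 then bij_betw phe (out_arcs F w) (out_arcs (double_graph E) (phv w) - {Ghost e})
                 else bij_betw phe (out_arcs F w) (out_arcs (double_graph E) (phv w)))
            | Ghost e \<Rightarrow>
                bij_betw phe (out_arcs F w) {d \<in> out_arcs (double_graph E) (phv w). is_ghost d}))"

lemma ext_w:
  assumes "w \<in> verts F"
  shows "(in_arcs F w = {} \<and>
           bij_betw phe (out_arcs F w) (out_arcs (double_graph E) (phv w))) \<or> goodv w"
  unfolding goodv_def
  using ext[unfolded ext_rep_graph_def, THEN conjunct2, THEN conjunct2, THEN bspec, OF assms] .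

lemma in_one:
  assumes "g \<in> in_arcs F w"
  shows "in_arcs F w = {g}"
proof -
  have "g \<in> arcs F" "tgt F g = w" using assms by (auto simp: in_arcs_def)
  then have w: "w \<in> verts F" using arc_facts(4) by blast
  from ext_w[OF w] show ?thesis
  proof
    assume "in_arcs F w = {} \<and> bij_betw phe (out_arcs F w) (out_arcs (double_graph E) (phv w))"
    then show ?thesis using assms by simp
  next
    assume "goodv w"
    then obtain fw where "in_arcs F w = {fw}" unfolding goodv_def by blast
    then show ?thesis using assms by simp
  qed
qed

lemma lemA:
  assumes w: "w \<in> verts F" and fw: "in_arcs F w = {fw}"
  shows "inj_on phe (out_arcs F w) \<and>
     phe ` out_arcs F w = {d \<in> arcs G. dsrc E d = phv w \<and> okp E sp (phe fw) d}"
proof -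
  have oa: "out_arcs G v = {d \<in> arcs G. dsrc E d = v}" for v
    by (simp add: out_arcs_def double_graph_def)
  have "goodv w" using ext_w[OF w] fw by simp
  then obtain fw' where fw': "in_arcs F w = {fw'}" and H': "case phe fw' of
              Real e \<Rightarrow>
                (if special E sp e
                 then bij_betw phe (out_arcs F w) (out_arcs (double_graph E) (phv w) - {Ghost e})
                 else bij_betw phe (out_arcs F w) (out_arcs (double_graph E) (phv w)))
            | Ghost e \<Rightarrow>
                bij_betw phe (out_arcs F w) {d \<in> out_arcs (double_graph E) (phv w). is_ghost d}"
    unfolding goodv_def by blast
  have "fw' = fw" using fw fw' by simp
  then have H: "case phe fw of
              Real e \<Rightarrow>
                (if special E sp e
                 then bij_betw phe (out_arcs F w) (out_arcs (double_graph E) (phv w) - {Ghost e})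
                 else bij_betw phe (out_arcs F w) (out_arcs (double_graph E) (phv w)))
            | Ghost e \<Rightarrow>
                bij_betw phe (out_arcs F w) {d \<in> out_arcs (double_graph E) (phv w). is_ghost d}"
    using H' by simp
  show ?thesis
  proof (cases "phe fw")
    case (Real e)
    show ?thesis
    proof (cases "special E sp e")
      case True
      with H Real have "bij_betw phe (out_arcs F w) (out_arcs G (phv w) - {Ghost e})" by simp
      then show ?thesis unfolding bij_betw_def oa using Real True by auto
    next
      case False
      with H Real have "bij_betw phe (out_arcs F w) (out_arcs G (phv w))" by simp
      then show ?thesis unfolding bij_betw_def oa using Real False by auto
    qed
  next
    case (Ghost e)
    with H have "bij_betw phe (out_arcs F w) {d \<in> out_arcs G (phv w). is_ghost d}" by simp
    then show ?thesis unfolding bij_betw_def oa using Ghost by auto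
  qed
qed

lemma ch_eq:
  assumes w: "w \<in> verts F" and fw: "in_arcs F w = {fw}" and g: "g \<in> out_arcs F w"
  shows "ch w (phe g) = g"
proof -
  have inj: "inj_on phe (out_arcs F w)" using lemA[OF w fw] by simp
  show ?thesis unfolding ch_def
  proof (rule the_equality)
    show "g \<in> out_arcs F w \<and> phe g = phe g" using g by simp
  next
    fix g' assume "g' \<in> out_arcs F w \<and> phe g' = phe g"
    then show "g' = g" using inj_onD[OF inj, of g' g] g by simp
  qed
qed

lemma ch_prop:
  assumes w: "w \<in> verts F" and fw: "in_arcs F w = {fw}"
    and d: "d \<in> arcs G" "dsrc E d = phv w" "okp E sp (phe fw) d"
  shows "ch w d \<in> out_arcs F w \<and> phe (ch w d) = d"
proof -
  have "d \<in> phe ` out_arcs F w" using lemA[OF w fw] d by simp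
  then obtain g where g: "g \<in> out_arcs F w" "phe g = d" by (elim imageE) simp
  then show ?thesis using ch_eq[OF w fw g(1)] by simp
qed

lemma m_pos: "0 < m"
  using cyc unfolding m_def is_closed_path_def is_path_def by auto

lemma length_x[simp]: "length x = m" unfolding x_def m_def by simp

lemma x_nth: "i < m \<Longrightarrow> x ! i = phe (p ! i)" unfolding x_def m_def by simp

lemma p_arcs: "i < m \<Longrightarrow> p ! i \<in> arcs F"
  using cyc unfolding m_def is_closed_path_def is_path_def by auto

lemma p_cons: "Suc i < m \<Longrightarrow> tgt F (p ! i) = src F (p ! Suc i)"
  using cyc unfolding m_def is_closed_path_def is_path_def by auto

lemma p_close: "tgt F (p ! (m - 1)) = src F (p ! 0)"
proof -
  have ne: "p \<noteq> []" and c: "tgt F (last p) = src F (hd p)"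
    using cyc by (auto simp: is_closed_path_def is_path_def)
  then show ?thesis by (simp add: m_def last_conv_nth hd_conv_nth)
qed

lemma src_next: "i < m \<Longrightarrow> src F (p ! (Suc i mod m)) = u i"
proof -
  assume i: "i < m"
  show ?thesis
  proof (cases "Suc i < m")
    case True then show ?thesis using p_cons[OF True] by (simp add: u_def)
  next
    case False
    then have "Suc i = m" using i by simp
    then have "i = m - 1" "Suc i mod m = 0" by simp_all
    then show ?thesis using p_close by (simp add: u_def)
  qed
qed

lemma src_prev: "i < m \<Longrightarrow> src F (p ! i) = u ((i + m - 1) mod m)"
proof -
  assume i: "i < m"
  show ?thesis
  proof (cases i)
    case 0
    then show ?thesis using p_close m_pos by (simp add: u_def)
  next
    case (Suc k)
    then have "(i + m - 1) mod m = k" using i by simp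
    then show ?thesis using p_cons[of k] Suc i by (simp add: u_def)
  qed
qed

lemma mod_inj: "i < m \<Longrightarrow> j < m \<Longrightarrow> Suc i mod m = Suc j mod m \<Longrightarrow> i = j"
proof -
  have a: "k < m \<Longrightarrow> Suc k mod m = (if Suc k < m then Suc k else 0)" for k
  proof -
    assume "k < m"
    then have "Suc k < m \<or> Suc k = m" by linarith
    then show ?thesis by auto
  qed
  assume "i < m" "j < m" "Suc i mod m = Suc j mod m"
  then show "i = j" using a[of i] a[of j] by (auto split: if_splits)
qed

lemma u_inj: "i < m \<Longrightarrow> j < m \<Longrightarrow> u i = u j \<Longrightarrow> i = j"
proof -
  assume i: "i < m" and j: "j < m" and e: "u i = u j"
  have "src F (p ! (Suc i mod m)) = src F (p ! (Suc j mod m))" using src_next i j e by simp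
  moreover have "Suc i mod m < m" "Suc j mod m < m" using m_pos by auto
  ultimately have "Suc i mod m = Suc j mod m"
    using nth_eq_iff_index_eq[OF dist, of "Suc i mod m" "Suc j mod m"] by (simp add: m_def)
  then show ?thesis using mod_inj i j by blast
qed

lemma u_in: "i < m \<Longrightarrow> in_arcs F (u i) = {p ! i}" "i < m \<Longrightarrow> u i \<in> verts F"
  using in_one[of "p ! i" "u i"] p_arcs arc_facts(4) by (auto simp: in_arcs_def u_def)

lemma x_arcs: "i < m \<Longrightarrow> x ! i \<in> arcs G"
  using x_nth p_arcs arc_facts(3) by simp

lemma Xi_iff: "y \<in> Xi E sp x i \<longleftrightarrow> y \<noteq> [] \<and> basis_path E sp y \<and> basis_path E sp (x ! i # y) \<and> hd y \<noteq> x ! (Suc i mod m)"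
  unfolding Xi_def by simp

lemma Xi_snoc:
  assumes "y \<noteq> []"
  shows "y @ [d] \<in> Xi E sp x i \<longleftrightarrow> y \<in> Xi E sp x i \<and> d \<in> arcs G \<and> dsrc E d = dtgt E (last y) \<and> okp E sp (last y) d"
proof -
  have 1: "basis_path E sp (y @ [d]) \<longleftrightarrow> basis_path E sp y \<and> d \<in> arcs G \<and> dsrc E d = dtgt E (last y) \<and> okp E sp (last y) d"
    using basis_path_snoc[OF assms, of E sp d] .
  have 2: "basis_path E sp (x ! i # y @ [d]) \<longleftrightarrow> basis_path E sp (x ! i # y) \<and> d \<in> arcs G \<and> dsrc E d = dtgt E (last y) \<and> okp E sp (last y) d"
    using basis_path_snoc[of "x ! i # y" E sp d] assms by simp
  have 3: "hd (y @ [d]) = hd y" using assms by simp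
  show ?thesis unfolding Xi_iff 1 2 3 using assms by auto
qed

lemma Xi_single:
  assumes "i < m"
  shows "[d] \<in> Xi E sp x i \<longleftrightarrow> d \<in> arcs G \<and> dsrc E d = dtgt E (x ! i) \<and> okp E sp (x ! i) d \<and> d \<noteq> x ! (Suc i mod m)"
proof -
  have 2: "basis_path E sp [x ! i, d] \<longleftrightarrow> d \<in> arcs G \<and> dsrc E d = dtgt E (x ! i) \<and> okp E sp (x ! i) d"
    using basis_path_snoc[of "[x ! i]" E sp d] basis_path_single[OF x_arcs[OF assms], of sp] by simp
  have 1: "d \<in> arcs G \<Longrightarrow> basis_path E sp [d]" using basis_path_single by blast
  show ?thesis unfolding Xi_iff using 1 2 by auto
qed

lemma idx_Inl: "Inl i \<in> Fx_index E sp x \<longleftrightarrow> i < m"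
  unfolding Fx_index_def by auto
lemma idx_Inr: "Inr (i, y) \<in> Fx_index E sp x \<longleftrightarrow> i < m \<and> y \<in> Xi E sp x i"
  unfolding Fx_index_def by auto

lemma walk_snoc: "walk v (y @ [d]) = tgt F (ch (walk v y) d)"
  unfolding walk_def by simp

lemma bv_Inr: "y \<noteq> [] \<Longrightarrow> bv (Inr (i, y)) = walk (u i) y"
  unfolding bv_def by (metis append_butlast_last_id be_simps(2) walk_snoc)

end

context P516 begin

abbreviation "idx \<equiv> Fx_index E sp x"

lemma bv_Inl: "bv (Inl i) = u i" unfolding bv_def u_def by simp

lemma walk_Nil: "walk v [] = v" unfolding walk_def by simp

lemma u_phv: "i < m \<Longrightarrow> phv (u i) = dtgt E (x ! i)"
  using arc_facts(1)[OF p_arcs] x_nth by (simp add: u_def)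

lemma Inr_facts:
  assumes i: "i < m"
  shows "y \<in> Xi E sp x i \<Longrightarrow> be (Inr (i, y)) \<in> arcs F \<and> phe (be (Inr (i, y))) = last y \<and>
     src F (be (Inr (i, y))) = bv (Fx_src x (Inr (i, y))) \<and> Fx_src x (Inr (i, y)) \<in> idx"
proof (induction y rule: rev_induct)
  case Nil
  then show ?case by (simp add: Xi_iff)
next
  case (snoc d y')
  show ?case
  proof (cases "y' = []")
    case True
    then have d: "d \<in> arcs G" "dsrc E d = dtgt E (x ! i)" "okp E sp (x ! i) d"
      using snoc.prems Xi_single[OF i] by auto
    have c: "ch (u i) d \<in> out_arcs F (u i) \<and> phe (ch (u i) d) = d"
      using ch_prop[OF u_in(2)[OF i] u_in(1)[OF i]] d u_phv[OF i] x_nth[OF i] by simp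
    have be: "be (Inr (i, y' @ [d])) = ch (u i) d" using True by (simp add: walk_Nil)
    show ?thesis using c be True i by (simp add: out_arcs_def bv_Inl idx_Inl)
  next
    case False
    then have y': "y' \<in> Xi E sp x i" and d: "d \<in> arcs G" "dsrc E d = dtgt E (last y')" "okp E sp (last y') d"
      using snoc.prems Xi_snoc by auto
    from snoc.IH[OF y'] have ih: "be (Inr (i, y')) \<in> arcs F" "phe (be (Inr (i, y'))) = last y'" by auto
    define v where "v = bv (Inr (i, y'))"
    have v: "v \<in> verts F" "in_arcs F v = {be (Inr (i, y'))}" "phv v = dtgt E (last y')"
      using arc_facts(4)[OF ih(1)] in_one[of "be (Inr (i, y'))" v] arc_facts(1)[OF ih(1)] ih(2) ih(1)
      by (auto simp: v_def bv_def in_arcs_def)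
    have c: "ch v d \<in> out_arcs F v \<and> phe (ch v d) = d"
      using ch_prop[OF v(1) v(2)] d v(3) ih(2) by simp
    have be: "be (Inr (i, y' @ [d])) = ch v d" using False by (simp add: v_def bv_Inr)
    have fs: "Fx_src x (Inr (i, y' @ [d])) = Inr (i, y')" using False by simp
    show ?thesis using c be fs y' i by (simp add: out_arcs_def idx_Inr v_def)
  qed
qed

lemma Iall:
  assumes a: "a \<in> idx"
  shows "be a \<in> arcs F \<and> phe (be a) = Fx_phie x a \<and> Fx_src x a \<in> idx \<and> src F (be a) = bv (Fx_src x a)"
proof (cases a)
  case (Inl i)
  then have i: "i < m" using a idx_Inl by simp
  have "(i + m - 1) mod m < m" using m_pos by simp
  then show ?thesis using Inl i p_arcs x_nth src_prev by (simp add: idx_Inl bv_Inl)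
next
  case (Inr b)
  then obtain i y where b: "a = Inr (i, y)" by (cases b) auto
  then have "i < m" "y \<in> Xi E sp x i" using a idx_Inr by auto
  then show ?thesis using Inr_facts b by (simp add: Xi_iff)
qed

lemma bv_in:
  assumes a: "a \<in> idx"
  shows "bv a \<in> verts F" "in_arcs F (bv a) = {be a}"
  using Iall[OF a] arc_facts(4) in_one[of "be a" "bv a"] by (auto simp: bv_def in_arcs_def)

lemma fwd:
  assumes a: "a \<in> idx" and g: "g \<in> out_arcs F (bv a)"
  shows "\<exists>b\<in>idx. g = be b"
proof -
  define w where "w = bv a"
  have w: "w \<in> verts F" "in_arcs F w = {be a}" using bv_in[OF a] by (simp_all add: w_def)
  have pw: "phv w = dtgt E (phe (be a))" using arc_facts(1) Iall[OF a] by (simp add: w_def bv_def)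
  have "phe g \<in> phe ` out_arcs F w" using g by (simp add: w_def)
  moreover have "phe ` out_arcs F w = {d \<in> arcs G. dsrc E d = phv w \<and> okp E sp (phe (be a)) d}"
    using lemA[OF w] by blast
  ultimately have d: "phe g \<in> arcs G" "dsrc E (phe g) = phv w" "okp E sp (phe (be a)) (phe g)"
    by auto
  have g': "g \<in> out_arcs F w" using g by (simp add: w_def)
  have chg: "ch w (phe g) = g" by (rule ch_eq[OF w g'])
  show ?thesis
  proof (cases a)
    case (Inl i)
    then have i: "i < m" using a idx_Inl by simp
    have wu: "w = u i" using Inl by (simp add: w_def bv_Inl)
    show ?thesis
    proof (cases "phe g = x ! (Suc i mod m)")
      case True
      have sm: "Suc i mod m < m" using m_pos by simp
      have "p ! (Suc i mod m) \<in> out_arcs F w" using p_arcs[OF sm] src_next[OF i] wu by (simp add: out_arcs_def)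
      moreover have e1: "phe g = phe (p ! (Suc i mod m))" using True x_nth[OF sm] by simp
      moreover have inj: "inj_on phe (out_arcs F w)" using lemA[OF w] by blast
      moreover have "g \<in> out_arcs F w" using g by (simp add: w_def)
      ultimately have "g = p ! (Suc i mod m)" by (meson inj_onD)
      then have "g = be (Inl (Suc i mod m))" by simp
      then show ?thesis using sm idx_Inl by blast
    next
      case False
      have "[phe g] \<in> Xi E sp x i" using Xi_single[OF i] d False pw Inl x_nth[OF i] by simp
      moreover have "be (Inr (i, [phe g])) = g" using chg wu by (simp add: walk_Nil)
      moreover have "Inr (i, [phe g]) \<in> idx" using i idx_Inr calculation(1) by blast
      ultimately show ?thesis by (intro bexI[of _ "Inr (i, [phe g])"]) auto
    qed
  next
    case (Inr b)
    then obtain i y where b: "a = Inr (i, y)" by (cases b) auto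
    then have i: "i < m" and y: "y \<in> Xi E sp x i" using a idx_Inr by auto
    then have ne: "y \<noteq> []" by (simp add: Xi_iff)
    have pl: "phe (be a) = last y" using Iall[OF a] b by simp
    have "y @ [phe g] \<in> Xi E sp x i" using Xi_snoc[OF ne] y d pw pl by simp
    moreover have "be (Inr (i, y @ [phe g])) = g" using chg b ne by (simp add: w_def bv_Inr)
    moreover have "Inr (i, y @ [phe g]) \<in> idx" using i idx_Inr calculation(1) by blast
    ultimately show ?thesis by (intro bexI[of _ "Inr (i, y @ [phe g])"]) auto
  qed
qed

end

context P516 begin

definition "depth a = (case a of Inl _ \<Rightarrow> 0 | Inr (_, y) \<Rightarrow> length (y :: 'e dedge list))"

lemma depth_simps[simp]: "depth (Inl i) = 0" "depth (Inr (j, y)) = length y"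
  unfolding depth_def by simp_all

lemma depth_src: "y \<noteq> [] \<Longrightarrow> depth (Fx_src x (Inr (j, y))) < length y"
  by (cases "length y = 1") auto

lemma mod_prev: "j < m \<Longrightarrow> Suc ((j + m - 1) mod m) mod m = j"
proof (cases j)
  case 0
  assume "j < m"
  then have "(j + m - 1) mod m = m - 1" using 0 by simp
  then show ?thesis using 0 m_pos by simp
next
  case (Suc k)
  assume "j < m"
  then have "(j + m - 1) mod m = k" using Suc by simp
  then show ?thesis using Suc \<open>j < m\<close> by simp
qed

lemma len1: "length y = 1 \<Longrightarrow> y = [last y] \<and> hd y = last y"
  by (cases y) auto

lemma mixed:
  assumes a: "Inl i \<in> idx" and b: "Inr (j, y) \<in> idx"
    and s: "Fx_src x (Inl i) = Fx_src x (Inr (j, y))"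
    and ph: "Fx_phie x (Inl i) = Fx_phie x (Inr (j, y))"
  shows False
proof -
  have i: "i < m" and j: "j < m" and y: "y \<in> Xi E sp x j" using a b idx_Inl idx_Inr by auto
  have l1: "length y = 1" and ji: "j = (i + m - 1) mod m"
    using s by (auto split: if_splits)
  have "x ! i = last y" using ph by simp
  moreover have "hd y = last y" using len1[OF l1] by simp
  moreover have "Suc j mod m = i" using ji mod_prev[OF i] by simp
  ultimately show False using y by (simp add: Xi_iff)
qed

lemma bv_inj_aux:
  "\<forall>a b. depth a + depth b = n \<longrightarrow> a \<in> idx \<longrightarrow> b \<in> idx \<longrightarrow> bv a = bv b \<longrightarrow> a = b"
proof (induction n rule: less_induct)
  case (less n)
  show ?case
  proof (intro allI impI)
    fix a b assume n: "depth a + depth b = n" and a: "a \<in> idx" and b: "b \<in> idx" and e: "bv a = bv b"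
    have ee: "be a = be b" using bv_in(2)[OF a] bv_in(2)[OF b] e by simp
    have ph: "Fx_phie x a = Fx_phie x b" using Iall[OF a] Iall[OF b] ee by simp
    have sr: "bv (Fx_src x a) = bv (Fx_src x b)" using Iall[OF a] Iall[OF b] ee by simp
    have sa: "Fx_src x a \<in> idx" "Fx_src x b \<in> idx" using Iall a b by auto
    have IH: "depth (Fx_src x a) + depth (Fx_src x b) < n \<Longrightarrow> Fx_src x a = Fx_src x b"
      using less.IH sa sr by blast
    show "a = b"
    proof (cases a)
      case (Inl i)
      show ?thesis
      proof (cases b)
        case (Inl j) then show ?thesis using \<open>a = Inl i\<close> e a b u_inj idx_Inl bv_Inl by auto
      next
        case (Inr c)
        then obtain j y where bb: "b = Inr (j, y)" by (cases c) auto
        then have "y \<noteq> []" using b idx_Inr Xi_iff by auto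
        then have "depth (Fx_src x a) + depth (Fx_src x b) < n" using n bb Inl depth_src[OF \<open>y \<noteq> []\<close>, of j] by simp
        then have "Fx_src x a = Fx_src x b" by (rule IH)
        then show ?thesis using mixed[of i j y] a b ph Inl bb by simp
      qed
    next
      case (Inr c)
      then obtain i y where aa: "a = Inr (i, y)" by (cases c) auto
      then have ny: "y \<noteq> []" using a idx_Inr Xi_iff by auto
      show ?thesis
      proof (cases b)
        case (Inl j)
        then have "depth (Fx_src x a) + depth (Fx_src x b) < n" using n aa Inl depth_src[OF ny, of i] by simp
        then have "Fx_src x a = Fx_src x b" by (rule IH)
        then show ?thesis using mixed[of j i y] a b ph Inl aa by simp
      next
        case (Inr c')
        then obtain j y' where bb: "b = Inr (j, y')" by (cases c') auto
        then have ny': "y' \<noteq> []" using b idx_Inr Xi_iff by auto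
        have "depth (Fx_src x a) + depth (Fx_src x b) < n"
          using n aa bb depth_src[OF ny, of i] depth_src[OF ny', of j] by simp
        then have s: "Fx_src x a = Fx_src x b" by (rule IH)
        have ll: "last y = last y'" using ph aa bb by simp
        show ?thesis
        proof (cases "length y = 1")
          case True
          then have "length y' = 1" "i = j" using s aa bb by (auto split: if_splits)
          then show ?thesis using len1[OF True] len1[of y'] ll aa bb by metis
        next
          case False
          then have "length y' \<noteq> 1" "i = j" "butlast y = butlast y'" using s aa bb by (auto split: if_splits)
          then show ?thesis using ll aa bb ny ny' by (metis append_butlast_last_id)
        qed
      qed
    qed
  qed
qed

lemma bv_inj: "inj_on bv idx"
proof (rule inj_onI)
  fix a b assume "a \<in> idx" "b \<in> idx" "bv a = bv b"
  then show "a = b" using bv_inj_aux[of "depth a + depth b"] by blast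
qed

lemma reach:
  assumes v: "v \<in> verts F"
  shows "v \<in> bv ` idx"
proof -
  have i0: "Inl 0 \<in> idx" using m_pos idx_Inl by simp
  have u0: "u 0 \<in> verts F" using u_in(2) m_pos by simp
  have "(undir_adj F)\<^sup>*\<^sup>* (u 0) v" using conn u0 v unfolding connected_graph_def by blast
  then show ?thesis
  proof (induction rule: rtranclp_induct)
    case base
    then show ?case using i0 bv_Inl by (metis image_eqI)
  next
    case (step y z)
    then obtain a where a: "a \<in> idx" and ya: "y = bv a" by blast
    from step(2) obtain e where e: "e \<in> arcs F" and
      c: "(src F e = y \<and> tgt F e = z) \<or> (src F e = z \<and> tgt F e = y)"
      unfolding undir_adj_def by blast
    from c show ?case
    proof
      assume h: "src F e = y \<and> tgt F e = z"
      then have "e \<in> out_arcs F (bv a)" using e ya by (simp add: out_arcs_def)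
      then obtain b where b: "b \<in> idx" "e = be b" using fwd[OF a] by blast
      then have "z = bv b" using h by (simp add: bv_def)
      then show ?case using b(1) by blast
    next
      assume h: "src F e = z \<and> tgt F e = y"
      then have "e \<in> in_arcs F (bv a)" using e ya by (simp add: in_arcs_def)
      then have "e = be a" using bv_in(2)[OF a] by simp
      then have "z = bv (Fx_src x a)" using h Iall[OF a] by simp
      then show ?case using Iall[OF a] by blast
    qed
  qed
qed

lemma bij_bv: "bij_betw bv idx (verts F)"
  unfolding bij_betw_def using bv_inj bv_in(1) reach by blast

lemma be_inj: "inj_on be idx"
proof (rule inj_onI)
  fix a b assume "a \<in> idx" "b \<in> idx" "be a = be b"
  then show "a = b" using bv_inj by (simp add: bv_def inj_on_def)
qed

lemma be_onto: "g \<in> arcs F \<Longrightarrow> g \<in> be ` idx"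
proof -
  assume g: "g \<in> arcs F"
  then have "tgt F g \<in> verts F" by (rule arc_facts(4))
  then obtain a where a: "a \<in> idx" "tgt F g = bv a" using reach by blast
  then have "g \<in> in_arcs F (bv a)" using g by (simp add: in_arcs_def)
  then have "g = be a" using bv_in(2)[OF a(1)] by simp
  then show ?thesis using a by blast
qed

lemma bij_be: "bij_betw be idx (arcs F)"
  unfolding bij_betw_def using be_inj Iall be_onto by blast

lemma ghost_next:
  assumes i: "i < m" and gh: "is_ghost (x ! i)"
  shows "is_ghost (x ! (Suc i mod m))"
proof -
  have sm: "Suc i mod m < m" using m_pos by simp
  have o: "p ! (Suc i mod m) \<in> out_arcs F (u i)" using p_arcs[OF sm] src_next[OF i] by (simp add: out_arcs_def)
  have "phe ` out_arcs F (u i) = {d \<in> arcs G. dsrc E d = phv (u i) \<and> okp E sp (phe (p ! i)) d}"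
    using lemA[OF u_in(2)[OF i] u_in(1)[OF i]] by blast
  then have "okp E sp (phe (p ! i)) (phe (p ! (Suc i mod m)))" using o by blast
  moreover obtain e where "phe (p ! i) = Ghost e" using gh x_nth[OF i] by (cases "phe (p ! i)") auto
  ultimately show ?thesis using x_nth[OF sm] by simp
qed

lemma x_Xc: "x \<in> Xc E"
proof -
  have ne: "x \<noteq> []" using m_pos by (simp add: x_def m_def)
  have sx: "set x \<subseteq> arcs G" using x_arcs by (auto simp: in_set_conv_nth)
  have cons: "\<forall>i. Suc i < length x \<longrightarrow> tgt G (x ! i) = src G (x ! Suc i)"
  proof (intro allI impI)
    fix i assume "Suc i < length x"
    then have i: "Suc i < m" by simp
    have "dtgt E (phe (p ! i)) = phv (tgt F (p ! i))" using arc_facts(1) p_arcs i by simp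
    also have "\<dots> = phv (src F (p ! Suc i))" using p_cons[OF i] by simp
    also have "\<dots> = dsrc E (phe (p ! Suc i))" using arc_facts(2) p_arcs i by simp
    finally show "tgt G (x ! i) = src G (x ! Suc i)" using i x_nth by (simp add: double_graph_def)
  qed
  have cl: "tgt G (last x) = src G (hd x)"
  proof -
    have m1: "m - 1 < m" using m_pos by simp
    have "dtgt E (phe (p ! (m - 1))) = phv (tgt F (p ! (m - 1)))" using arc_facts(1) p_arcs m1 by simp
    also have "\<dots> = phv (src F (p ! 0))" using p_close by simp
    also have "\<dots> = dsrc E (phe (p ! 0))" using arc_facts(2) p_arcs m_pos by simp
    finally show ?thesis using ne x_nth m1 m_pos
      by (simp add: double_graph_def last_conv_nth hd_conv_nth)
  qed
  have rg: "(\<forall>d\<in>set x. is_real d) \<or> (\<forall>d\<in>set x. is_ghost d)"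
  proof (cases "\<exists>j<m. is_ghost (x ! j)")
    case True
    then obtain j where j: "j < m" "is_ghost (x ! j)" by blast
    have all: "is_ghost (x ! ((j + k) mod m))" for k
    proof (induction k)
      case 0 then show ?case using j by simp
    next
      case (Suc k)
      have "(j + Suc k) mod m = Suc ((j + k) mod m) mod m" by (simp add: mod_Suc_eq)
      then show ?case using ghost_next[OF _ Suc] m_pos by simp
    qed
    have "is_ghost (x ! l)" if l: "l < m" for l
    proof -
      have "(j + (m - j + l)) mod m = l" using j(1) l by simp
      then show ?thesis using all[of "m - j + l"] by simp
    qed
    then show ?thesis by (auto simp: in_set_conv_nth)
  next
    case False
    then have "is_real (x ! l)" if "l < m" for l using that by (cases "x ! l") auto
    then show ?thesis by (auto simp: in_set_conv_nth)
  qed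
  show ?thesis unfolding Xc_def is_closed_path_def is_path_def using ne sx cons cl rg by blast
qed

lemma iso: "rep_isomorphic F phv phe (Fx_graph E sp x) (Fx_phiv E x) (Fx_phie x)"
  unfolding rep_isomorphic_def
proof (intro exI conjI ballI)
  let ?av = "inv_into idx bv" and ?ae = "inv_into idx be"
  show "bij_betw ?av (verts F) (verts (Fx_graph E sp x))"
    using bij_betw_inv_into[OF bij_bv] by (simp add: Fx_graph_def)
  show "bij_betw ?ae (arcs F) (arcs (Fx_graph E sp x))"
    using bij_betw_inv_into[OF bij_be] by (simp add: Fx_graph_def)
  fix f assume f: "f \<in> arcs F"
  then obtain a where a: "a \<in> idx" "f = be a" using be_onto by blast
  have aef: "?ae f = a" using a be_inj by (simp add: inv_into_f_f)
  have I: "be a \<in> arcs F \<and> phe (be a) = Fx_phie x a \<and> Fx_src x a \<in> idx \<and> src F (be a) = bv (Fx_src x a)"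
    by (rule Iall[OF a(1)])
  show "src (Fx_graph E sp x) (?ae f) = ?av (src F f)"
    using aef a I bv_inj by (simp add: Fx_graph_def inv_into_f_f)
  show "tgt (Fx_graph E sp x) (?ae f) = ?av (tgt F f)"
    using aef a bv_inj by (simp add: Fx_graph_def inv_into_f_f bv_def[symmetric])
  show "Fx_phie x (?ae f) = phe f" using aef a I by simp
next
  fix w assume w: "w \<in> verts F"
  then obtain a where a: "a \<in> idx" "w = bv a" using reach by blast
  have "inv_into idx bv w = a" using a bv_inj by (simp add: inv_into_f_f)
  then show "Fx_phiv E x (inv_into idx bv w) = phv w"
    using a Iall[OF a(1)] arc_facts(1) by (simp add: Fx_phiv_def bv_def)
qed

end

theorem proposition5p16:
  fixes E :: "('v, 'e) dgraph" and sp :: "'v \<Rightarrow> 'e"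
    and F :: "('w, 'f) dgraph" and phv :: "'w \<Rightarrow> 'v" and phe :: "'f \<Rightarrow> 'e dedge"
  assumes "is_dgraph E" and "row_finite E" and "special_choice E sp"
    and "ext_rep_graph E sp F phv phe"
    and "cyclic_graph F" and "connected_graph F"
  shows "\<exists>x\<in>Xc E. rep_isomorphic F phv phe (Fx_graph E sp x) (Fx_phiv E x) (Fx_phie x)"
proof -
  obtain p where p: "is_closed_path F p" "distinct (map (src F) p)"
    using assms(5) unfolding cyclic_graph_def by blast
  interpret P: P516 E sp F phv phe p
    by unfold_locales (use assms p in auto)
  show ?thesis using P.x_Xc P.iso by blast
qed

end
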